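(* Consider the iterative minimum repairing algorithm IMR($p$) described in the context. If the estimated parameters converge, i.e. $\lim_{k\to+\infty}\phi^{(k)}=\phi$ for some $\phi\in\mathbb{R}^p$, then the repair also converges: $$\lim_{k\to+\infty}\sum_{i=1}^n\left(y_i^{(k+1)}-y_i^{(k)}\right)=0.$$
   Context: Let $n\ge 1$ and let $x=(x_1,\dots,x_n)\in\mathbb{R}^n$ be an observed time series. A set $L\subseteq\{1,\dots,n\}$ of labeled indices is given, together with labeled values $y^{(0)}_t$ for $t\in L$; for $t\notin L$ put $y^{(0)}_t=x_t$. Fix an order $p\ge 1$ and a threshold $\tau\ge 0$. IMR($p$) produces sequences $y^{(k)}\in\mathbb{R}^n$, $k=0,1,2,\dots$; write $z^{(k)}_t=y^{(k)}_t-x_t$. In iteration $k$: (S1) Parameter estimation by ordinary least squares: $\phi^{(k)}=(\phi^{(k)}_1,\dots,\phi^{(k)}_p)^\top=((Z^{(k)})^\top Z^{(k)})^{-1}(Z^{(k)})^\top V^{(k)}$, where $V^{(k)}=(z^{(k)}_{p+1},\dots,z^{(k)}_n)^\top$ and $Z^{(k)}$ is the $(n-p)\times p$ matrix whose $r$-th row ($r=1,\dots,n-p$) is $(z^{(k)}_{r+p-1},z^{(k)}_{r+p-2},\dots,z^{(k)}_{r})$. (S2) For each $t\in\{p+1,\dots,n\}\setminus L$ compute $\hat y^{(k)}_t=\sum_{i=1}^p\phi^{(k)}_i z^{(k)}_{t-i}+x_t$; $t$ is a candidate only if $|\hat y^{(k)}_t-y^{(k)}_t|>\tau$. (S3) If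 candidates exist, choose a candidate $t^*$ minimizing $|\hat y^{(k)}_t-x_t|$ (ties broken arbitrarily), set $y^{(k+1)}_{t^*}=\hat y^{(k)}_{t^*}$ and keep all other values; if no candidate exists, the algorithm terminates and $y^{(k+1)}=y^{(k)}$ from then on. Labeled values are never modified. *)

theory Defs
  imports Complex_Main "Jordan_Normal_Form.Gauss_Jordan_Elimination"
begin

text \<open>Series are functions on indices 1..n (values at other indices are irrelevant).
  z is the repair deviation z_t = y_t - x_t.\<close>

text \<open>Design matrix Z ((n-p) x p, 0-indexed): row r (r = 0..n-p-1) is
  (z_{r+p}, z_{r+p-1}, ..., z_{r+1}), i.e. entry (r,c) is z_{r+p-c}.\<close>
definition imr_Z :: "nat \<Rightarrow> nat \<Rightarrow> (nat \<Rightarrow> real) \<Rightarrow> real mat" where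
  "imr_Z n p z = mat (n - p) p (\<lambda>(r, c). z (r + p - c))"

definition imr_V :: "nat \<Rightarrow> nat \<Rightarrow> (nat \<Rightarrow> real) \<Rightarrow> real vec" where
  "imr_V n p z = vec (n - p) (\<lambda>r. z (r + p + 1))"

definition imr_gram :: "nat \<Rightarrow> nat \<Rightarrow> (nat \<Rightarrow> real) \<Rightarrow> real mat" where
  "imr_gram n p z = transpose_mat (imr_Z n p z) * imr_Z n p z"

text \<open>OLS estimate ((Z^T Z)^{-1} Z^T V), returned as phi_1..phi_p (phi i for i in 1..p).\<close>
definition imr_phi :: "nat \<Rightarrow> nat \<Rightarrow> (nat \<Rightarrow> real) \<Rightarrow> nat \<Rightarrow> real" where
  "imr_phi n p z i =
     (the (mat_inverse (imr_gram n p z)) *\<^sub>v (transpose_mat (imr_Z n p z) *\<^sub>v imr_V n p z)) $ (i - 1)"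

definition imr_yhat :: "nat \<Rightarrow> nat \<Rightarrow> (nat \<Rightarrow> real) \<Rightarrow> (nat \<Rightarrow> real) \<Rightarrow> nat \<Rightarrow> real" where
  "imr_yhat n p x y t =
     (\<Sum>i=1..p. imr_phi n p (\<lambda>s. y s - x s) i * (y (t - i) - x (t - i))) + x t"

definition imr_cand :: "nat \<Rightarrow> nat \<Rightarrow> real \<Rightarrow> nat set \<Rightarrow> (nat \<Rightarrow> real) \<Rightarrow> (nat \<Rightarrow> real) \<Rightarrow> nat set" where
  "imr_cand n p \<tau> L x y =
     {t \<in> {p+1..n} - L. \<bar>imr_yhat n p x y t - y t\<bar> > \<tau>}"

text \<open>One IMR(p) iteration from y to y' (ties broken arbitrarily, labeled values untouched).\<close>
definition imr_step :: "nat \<Rightarrow> nat \<Rightarrow> real \<Rightarrow> nat set \<Rightarrow> (nat \<Rightarrow> real) \<Rightarrow> (nat \<Rightarrow> real) \<Rightarrow> (nat \<Rightarrow> real) \<Rightarrow> bool" where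
  "imr_step n p \<tau> L x y y' \<longleftrightarrow>
     (if imr_cand n p \<tau> L x y = {} then (\<forall>t\<in>{1..n}. y' t = y t)
      else (\<exists>t\<^sub>0 \<in> imr_cand n p \<tau> L x y.
              (\<forall>t \<in> imr_cand n p \<tau> L x y.
                  \<bar>imr_yhat n p x y t\<^sub>0 - x t\<^sub>0\<bar> \<le> \<bar>imr_yhat n p x y t - x t\<bar>) \<and>
              y' t\<^sub>0 = imr_yhat n p x y t\<^sub>0 \<and>
              (\<forall>t\<in>{1..n} - {t\<^sub>0}. y' t = y t)))"

definition imr_run :: "nat \<Rightarrow> nat \<Rightarrow> real \<Rightarrow> nat set \<Rightarrow> (nat \<Rightarrow> real) \<Rightarrow> (nat \<Rightarrow> real)
    \<Rightarrow> (nat \<Rightarrow> nat \<Rightarrow> real) \<Rightarrow> bool" where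
  "imr_run n p \<tau> L x yL y \<longleftrightarrow>
     (\<forall>t\<in>{1..n}. y 0 t = (if t \<in> L then yL t else x t)) \<and>
     (\<forall>k. invertible_mat (imr_gram n p (\<lambda>s. y k s - x s))) \<and>
     (\<forall>k. imr_step n p \<tau> L x (y k) (y (Suc k)))"

end

theory Submission
  imports Defs
begin

lemma conv_switch:
  fixes a g :: "nat \<Rightarrow> real"
  assumes g: "convergent g" and ag: "\<And>k. a (Suc k) = a k \<or> a (Suc k) = g k"
  shows "convergent a"
proof -
  obtain l where gl: "g \<longlonglongrightarrow> l" using g convergent_def by blast
  have "Cauchy a"
  proof (rule CauchyI)
    fix e :: real assume e: "e > 0"
    then have "e/2 > 0" by simp
    from LIMSEQ_D[OF gl this] obtain N where N: "\<And>k. k \<ge> N \<Longrightarrow> norm (g k - l) < e/2" by blast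
    show "\<exists>M. \<forall>m\<ge>M. \<forall>n\<ge>M. norm (a m - a n) < e"
    proof (cases "\<exists>k0\<ge>N. a (Suc k0) = g k0")
      case True
      then obtain k0 where k0: "k0 \<ge> N" "a (Suc k0) = g k0" by blast
      have cl: "norm (a k - l) < e/2" if "k \<ge> Suc k0" for k
        using that
      proof (induction k rule: dec_induct)
        case base then show ?case using k0 N by simp
      next
        case (step m)
        then show ?case using ag[of m] N[of m] k0 by auto
      qed
      show ?thesis
      proof (intro exI allI impI)
        fix m n assume "m \<ge> Suc k0" "n \<ge> Suc k0"
        then have "norm (a m - l) < e/2" "norm (a n - l) < e/2" using cl by auto
        then have "\<bar>a m - l\<bar> < e/2" "\<bar>a n - l\<bar> < e/2" by simp_all
        then show "norm (a m - a n) < e" unfolding real_norm_def by linarith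
      qed
    next
      case False
      have c: "a k = a N" if "k \<ge> N" for k
        using that
      proof (induction k rule: dec_induct)
        case base then show ?case by simp
      next
        case (step m)
        have "a (Suc m) \<noteq> g m" using False step.hyps(1) by blast
        then show ?case using ag[of m] step.IH by simp
      qed
      show ?thesis
      proof (intro exI allI impI)
        fix m n assume "m \<ge> N" "n \<ge> N"
        then have "a m = a n" using c by metis
        then show "norm (a m - a n) < e" using e by simp
      qed
    qed
  qed
  then show ?thesis using Cauchy_convergent_iff by blast
qed

theorem proposition3:
  fixes n p :: nat and \<tau> :: real and L :: "nat set"
    and x yL :: "nat \<Rightarrow> real" and y :: "nat \<Rightarrow> nat \<Rightarrow> real" and \<phi> :: "nat \<Rightarrow> real"
  assumes "n \<ge> 1" and "p \<ge> 1" and "\<tau> \<ge> 0" and "L \<subseteq> {1..n}"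
    and "imr_run n p \<tau> L x yL y"
    and "\<forall>i\<in>{1..p}. (\<lambda>k. imr_phi n p (\<lambda>s. y k s - x s) i) \<longlonglongrightarrow> \<phi> i"
  shows "(\<lambda>k. \<Sum>i=1..n. y (Suc k) i - y k i) \<longlonglongrightarrow> 0"
proof -
  have step: "\<And>k. imr_step n p \<tau> L x (y k) (y (Suc k))" using assms(5) unfolding imr_run_def by blast
  have upd: "y (Suc k) t = y k t \<or> (t \<in> {p+1..n} \<and> y (Suc k) t = imr_yhat n p x (y k) t)"
    if "t \<in> {1..n}" for k t
  proof (cases "imr_cand n p \<tau> L x (y k) = {}")
    case True then show ?thesis using step[of k] that unfolding imr_step_def by auto
  next
    case False
    then obtain t0 where t0: "t0 \<in> imr_cand n p \<tau> L x (y k)" "y (Suc k) t0 = imr_yhat n p x (y k) t0"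
      "\<forall>t\<in>{1..n} - {t0}. y (Suc k) t = y k t"
      using step[of k] unfolding imr_step_def by auto
    have "t0 \<in> {p+1..n}" using t0(1) unfolding imr_cand_def by auto
    then show ?thesis using t0 that by (cases "t = t0") auto
  qed
  have conv: "\<forall>t. t \<in> {1..n} \<longrightarrow> convergent (\<lambda>k. y k t)"
  proof (intro allI)
    fix t show "t \<in> {1..n} \<longrightarrow> convergent (\<lambda>k. y k t)"
    proof (induction t rule: less_induct)
      case (less t)
      show ?case
      proof
        assume t: "t \<in> {1..n}"
        show "convergent (\<lambda>k. y k t)"
        proof (cases "t \<ge> p + 1")
          case False
          then have "y (Suc k) t = y k t" for k using upd[OF t, of k] by auto
          then show ?thesis using conv_switch[of "\<lambda>k. 0::real" "\<lambda>k. y k t"] convergent_const[of "0::real"] by blast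
        next
          case True
          have ci: "convergent (\<lambda>k. y k (t - i))" if "i \<in> {1..p}" for i
            proof -
            have "t - i < t" "t - i \<in> {1..n}" using that True t by auto
            then show ?thesis using less by blast
          qed
          have "convergent (\<lambda>k. imr_yhat n p x (y k) t)"
            unfolding imr_yhat_def
          proof (intro convergent_add convergent_const convergent_sum convergent_mult convergent_diff)
            fix i assume i: "i \<in> {1..p}"
            show "convergent (\<lambda>k. imr_phi n p (\<lambda>s. y k s - x s) i)"
              using assms(6) i convergent_def by blast
            show "convergent (\<lambda>k. y k (t - i))" using ci[OF i] .
          qed
          then show ?thesis using conv_switch[of "\<lambda>k. imr_yhat n p x (y k) t" "\<lambda>k. y k t"] upd[OF t] by blast
        qed
      qed
    qed
  qed
  have "(\<lambda>k. \<Sum>i=1..n. y (Suc k) i - y k i) \<longlonglongrightarrow> (\<Sum>i=1..n. lim (\<lambda>k. y k i) - lim (\<lambda>k. y k i))"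
  proof (intro tendsto_sum tendsto_diff)
    fix i assume i: "i \<in> {1..n}"
    have "(\<lambda>k. y k i) \<longlonglongrightarrow> lim (\<lambda>k. y k i)" using conv i convergent_LIMSEQ_iff by blast
    then show "(\<lambda>k. y k i) \<longlonglongrightarrow> lim (\<lambda>k. y k i)" "(\<lambda>k. y (Suc k) i) \<longlonglongrightarrow> lim (\<lambda>k. y k i)"
      using LIMSEQ_Suc by auto
  qed
  then show ?thesis by simp
qed

end
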